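(* Let $\varphi(u,v)$ be a (twice continuously differentiable) solution of the equation $$\varphi_{uu}+\varphi_{vv}+\frac{1}{v}\varphi_v=0$$ on an open set $D\subset\{(u,v)\in\mathbb{R}^2: v\neq 0\}$. Then for any pair of conjugate harmonic functions $u(x,y),v(x,y)$ on an open set $\Omega\subset\mathbb{R}^2$ (i.e. $u_x=v_y$, $u_y=-v_x$) with $(u(x,y),v(x,y))\in D$ for $(x,y)\in\Omega$, the function $\psi(x,y)=\varphi(u(x,y),v(x,y))$ satisfies $$(v\,\psi_x)_x+(v\,\psi_y)_y=0\quad\text{on }\Omega .$$ *)

theory Defs
  imports "HOL-Analysis.Analysis"
begin

definition pdx :: "(real \<times> real \<Rightarrow> real) \<Rightarrow> real \<times> real \<Rightarrow> real" where
  "pdx f p = deriv (\<lambda>t. f (t, snd p)) (fst p)"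

definition pdy :: "(real \<times> real \<Rightarrow> real) \<Rightarrow> real \<times> real \<Rightarrow> real" where
  "pdy f p = deriv (\<lambda>s. f (fst p, s)) (snd p)"

end

theory Submission
  imports Defs
begin

lemma hd_chain:
  fixes g u v :: "real \<times> real \<Rightarrow> real"
  assumes "(g has_derivative (\<lambda>h. a * fst h + b * snd h)) (at (u q, v q))"
    and "(u has_derivative (\<lambda>h. ux * fst h + uy * snd h)) (at q)"
    and "(v has_derivative (\<lambda>h. vx * fst h + vy * snd h)) (at q)"
  shows "((\<lambda>q. g (u q, v q)) has_derivative
          (\<lambda>h. (a * ux + b * vx) * fst h + (a * uy + b * vy) * snd h)) (at q)"
proof -
  have P: "((\<lambda>q. (u q, v q)) has_derivative
      (\<lambda>h. (ux * fst h + uy * snd h, vx * fst h + vy * snd h))) (at q)"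
    using has_derivative_Pair[OF assms(2,3)] .
  from has_derivative_compose[OF P assms(1)]
  show ?thesis by (rule has_derivative_eq_rhs) (auto simp: algebra_simps fun_eq_iff)
qed

lemma hd_mult:
  fixes f g :: "real \<times> real \<Rightarrow> real"
  assumes "(f has_derivative (\<lambda>h. fx * fst h + fy * snd h)) (at q)"
    and "(g has_derivative (\<lambda>h. gx * fst h + gy * snd h)) (at q)"
  shows "((\<lambda>q. f q * g q) has_derivative
          (\<lambda>h. (f q * gx + fx * g q) * fst h + (f q * gy + fy * g q) * snd h)) (at q)"
  using has_derivative_mult[OF assms]
  by (rule has_derivative_eq_rhs) (auto simp: algebra_simps fun_eq_iff)

lemma hd_add:
  fixes f g :: "real \<times> real \<Rightarrow> real"
  assumes "(f has_derivative (\<lambda>h. fx * fst h + fy * snd h)) (at q)"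
    and "(g has_derivative (\<lambda>h. gx * fst h + gy * snd h)) (at q)"
  shows "((\<lambda>q. f q + g q) has_derivative
          (\<lambda>h. (fx + gx) * fst h + (fy + gy) * snd h)) (at q)"
  using has_derivative_add[OF assms]
  by (rule has_derivative_eq_rhs) (auto simp: algebra_simps fun_eq_iff)

lemma hd_slice1:
  fixes f :: "real \<times> real \<Rightarrow> real"
  assumes "(f has_derivative (\<lambda>h. X * fst h + Y * snd h)) (at (a, b))"
  shows "((\<lambda>t. f (t, b)) has_real_derivative X) (at a)"
proof -
  have P: "((\<lambda>t. (t, b)) has_derivative (\<lambda>h. (h, 0))) (at a)"
    by (auto intro!: derivative_eq_intros)
  from has_derivative_compose[OF P assms]
  have "((\<lambda>t. f (t, b)) has_derivative (\<lambda>h. X * h)) (at a)" by simp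
  then show ?thesis unfolding has_field_derivative_def
    by (rule has_derivative_eq_rhs) (auto simp: fun_eq_iff)
qed

lemma hd_slice2:
  fixes f :: "real \<times> real \<Rightarrow> real"
  assumes "(f has_derivative (\<lambda>h. X * fst h + Y * snd h)) (at (a, b))"
  shows "((\<lambda>t. f (a, t)) has_real_derivative Y) (at b)"
proof -
  have P: "((\<lambda>t. (a, t)) has_derivative (\<lambda>h. (0, h))) (at b)"
    by (auto intro!: derivative_eq_intros)
  from has_derivative_compose[OF P assms]
  have "((\<lambda>t. f (a, t)) has_derivative (\<lambda>h. Y * h)) (at b)" by simp
  then show ?thesis unfolding has_field_derivative_def
    by (rule has_derivative_eq_rhs) (auto simp: fun_eq_iff)
qed

lemma open_slice1: "open S \<Longrightarrow> open {t::real. (t, b::real) \<in> S}"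
proof -
  assume "open S"
  have "{t. (t, b) \<in> S} = (\<lambda>t. (t, b)) -` S" by auto
  moreover have "open ((\<lambda>t::real. (t, b)) -` S)"
    by (rule open_vimage[OF \<open>open S\<close>]) (auto intro!: continuous_intros)
  ultimately show ?thesis by simp
qed

lemma open_slice2: "open S \<Longrightarrow> open {t::real. (a::real, t) \<in> S}"
proof -
  assume "open S"
  have "{t. (a, t) \<in> S} = (\<lambda>t. (a, t)) -` S" by auto
  moreover have "open ((\<lambda>t::real. (a, t)) -` S)"
    by (rule open_vimage[OF \<open>open S\<close>]) (auto intro!: continuous_intros)
  ultimately show ?thesis by simp
qed

lemma final_alg:
  fixes V :: real
  assumes "V \<noteq> 0"
    and "puu + pvv + (1 / V) * pv = 0"
    and "uxx + uyy = 0" "vxx + vyy = 0" "ux = vy" "uy = - vx"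
  shows "(V * ((pu * uxx + (puu * ux + puv * vx) * ux) + (pv * vxx + (pvu * ux + pvv * vx) * vx))
            + vx * (pu * ux + pv * vx))
       + (V * ((pu * uyy + (puu * uy + puv * vy) * uy) + (pv * vyy + (pvu * uy + pvv * vy) * vy))
            + vy * (pu * uy + pv * vy)) = 0"
proof -
  have pv: "pv = - V * (puu + pvv)" using assms(1,2) by (simp add: field_simps)
  show ?thesis using assms(3-6) unfolding pv
    by (simp add: algebra_simps) algebra
qed

theorem lemma1:
  fixes \<phi> \<phi>u \<phi>v \<phi>uu \<phi>uv \<phi>vu \<phi>vv :: "real \<times> real \<Rightarrow> real"
    and u v ux uy vx vy uxx uxy uyx uyy vxx vxy vyx vyy :: "real \<times> real \<Rightarrow> real"
    and D \<Omega> :: "(real \<times> real) set"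
  assumes D_open: "open D"
    and D_sub: "D \<subseteq> {p. snd p \<noteq> 0}"
    and \<phi>_d1: "\<forall>p\<in>D. (\<phi> has_derivative (\<lambda>h. \<phi>u p * fst h + \<phi>v p * snd h)) (at p)"
    and \<phi>_d2u: "\<forall>p\<in>D. (\<phi>u has_derivative (\<lambda>h. \<phi>uu p * fst h + \<phi>uv p * snd h)) (at p)"
    and \<phi>_d2v: "\<forall>p\<in>D. (\<phi>v has_derivative (\<lambda>h. \<phi>vu p * fst h + \<phi>vv p * snd h)) (at p)"
    and \<phi>_cont: "continuous_on D \<phi>uu" "continuous_on D \<phi>uv"
                 "continuous_on D \<phi>vu" "continuous_on D \<phi>vv"
    and \<phi>_eq: "\<forall>p\<in>D. \<phi>uu p + \<phi>vv p + (1 / snd p) * \<phi>v p = 0"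
    and \<Omega>_open: "open \<Omega>"
    and u_d1: "\<forall>p\<in>\<Omega>. (u has_derivative (\<lambda>h. ux p * fst h + uy p * snd h)) (at p)"
    and v_d1: "\<forall>p\<in>\<Omega>. (v has_derivative (\<lambda>h. vx p * fst h + vy p * snd h)) (at p)"
    and ux_d: "\<forall>p\<in>\<Omega>. (ux has_derivative (\<lambda>h. uxx p * fst h + uxy p * snd h)) (at p)"
    and uy_d: "\<forall>p\<in>\<Omega>. (uy has_derivative (\<lambda>h. uyx p * fst h + uyy p * snd h)) (at p)"
    and vx_d: "\<forall>p\<in>\<Omega>. (vx has_derivative (\<lambda>h. vxx p * fst h + vxy p * snd h)) (at p)"
    and vy_d: "\<forall>p\<in>\<Omega>. (vy has_derivative (\<lambda>h. vyx p * fst h + vyy p * snd h)) (at p)"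
    and uv_cont: "continuous_on \<Omega> uxx" "continuous_on \<Omega> uxy" "continuous_on \<Omega> uyx"
                 "continuous_on \<Omega> uyy" "continuous_on \<Omega> vxx" "continuous_on \<Omega> vxy"
                 "continuous_on \<Omega> vyx" "continuous_on \<Omega> vyy"
    and u_harm: "\<forall>p\<in>\<Omega>. uxx p + uyy p = 0"
    and v_harm: "\<forall>p\<in>\<Omega>. vxx p + vyy p = 0"
    and CR1: "\<forall>p\<in>\<Omega>. ux p = vy p"
    and CR2: "\<forall>p\<in>\<Omega>. uy p = - vx p"
    and maps: "\<forall>p\<in>\<Omega>. (u p, v p) \<in> D"
  shows "\<forall>x y. (x, y) \<in> \<Omega> \<longrightarrow>
           (let \<psi> = (\<lambda>q. \<phi> (u q, v q)) in
            \<exists>A B. ((\<lambda>t. v (t, y) * pdx \<psi> (t, y)) has_real_derivative A) (at x)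
                \<and> ((\<lambda>s. v (x, s) * pdy \<psi> (x, s)) has_real_derivative B) (at y)
                \<and> A + B = 0)"
proof (intro allI impI)
  fix x y assume p: "(x, y) \<in> \<Omega>"
  define \<psi> where "\<psi> = (\<lambda>q. \<phi> (u q, v q))"
  have mp: "\<And>q. q \<in> \<Omega> \<Longrightarrow> (u q, v q) \<in> D" using maps by blast
  have psid: "(\<psi> has_derivative (\<lambda>h.
      (\<phi>u (u q, v q) * ux q + \<phi>v (u q, v q) * vx q) * fst h
    + (\<phi>u (u q, v q) * uy q + \<phi>v (u q, v q) * vy q) * snd h)) (at q)" if "q \<in> \<Omega>" for q
    unfolding \<psi>_def
    using hd_chain[OF \<phi>_d1[rule_format, OF mp[OF that]] u_d1[rule_format, OF that]
        v_d1[rule_format, OF that]] .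
  have pdx_eq: "pdx \<psi> q = \<phi>u (u q, v q) * ux q + \<phi>v (u q, v q) * vx q" if "q \<in> \<Omega>" for q
  proof -
    obtain a b where q: "q = (a, b)" by (cases q)
    show ?thesis unfolding pdx_def q fst_conv snd_conv
      by (rule DERIV_imp_deriv, rule hd_slice1) (use psid[OF that] q in simp)
  qed
  have pdy_eq: "pdy \<psi> q = \<phi>u (u q, v q) * uy q + \<phi>v (u q, v q) * vy q" if "q \<in> \<Omega>" for q
  proof -
    obtain a b where q: "q = (a, b)" by (cases q)
    show ?thesis unfolding pdy_def q fst_conv snd_conv
      by (rule DERIV_imp_deriv, rule hd_slice2) (use psid[OF that] q in simp)
  qed
  note cu = hd_chain[OF \<phi>_d2u[rule_format, OF mp[OF p]] u_d1[rule_format, OF p]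
        v_d1[rule_format, OF p]]
  note cv = hd_chain[OF \<phi>_d2v[rule_format, OF mp[OF p]] u_d1[rule_format, OF p]
        v_d1[rule_format, OF p]]
  note G1 = hd_mult[OF v_d1[rule_format, OF p]
     hd_add[OF hd_mult[OF cu ux_d[rule_format, OF p]] hd_mult[OF cv vx_d[rule_format, OF p]]]]
  note G2 = hd_mult[OF v_d1[rule_format, OF p]
     hd_add[OF hd_mult[OF cu uy_d[rule_format, OF p]] hd_mult[OF cv vy_d[rule_format, OF p]]]]
  note D1 = has_field_derivative_transform_within_open[OF hd_slice1[OF G1] open_slice1[where b=y, OF \<Omega>_open]]
  note D2 = has_field_derivative_transform_within_open[OF hd_slice2[OF G2] open_slice2[where a=x, OF \<Omega>_open]]
  have pv: "v (x, y) \<noteq> 0" using D_sub mp[OF p] by auto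
  have pe: "\<phi>uu (u (x, y), v (x, y)) + \<phi>vv (u (x, y), v (x, y))
      + (1 / v (x, y)) * \<phi>v (u (x, y), v (x, y)) = 0"
    using \<phi>_eq mp[OF p] by fastforce
  show "let \<psi> = (\<lambda>q. \<phi> (u q, v q)) in
            \<exists>A B. ((\<lambda>t. v (t, y) * pdx \<psi> (t, y)) has_real_derivative A) (at x)
                \<and> ((\<lambda>s. v (x, s) * pdy \<psi> (x, s)) has_real_derivative B) (at y)
                \<and> A + B = 0"
    unfolding Let_def \<psi>_def[symmetric]
    apply (intro exI conjI)
      apply (rule D1)
       apply (simp add: p)
      apply (simp add: pdx_eq)
     apply (rule D2)
      apply (simp add: p)
     apply (simp add: pdy_eq)
    using final_alg[where pu="\<phi>u (u (x, y), v (x, y))" and puv="\<phi>uv (u (x, y), v (x, y))" and pvu="\<phi>vu (u (x, y), v (x, y))", OF pv pe u_harm[rule_format, OF p] v_harm[rule_format, OF p]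
       CR1[rule_format, OF p] CR2[rule_format, OF p]]
    by (simp add: algebra_simps)
qed

end
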